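(* Let $V$ be a closed subspace of $\mathbb L^2$ and let $A_1,\dots,A_d$ be pairwise commuting bounded linear operators from $V$ to $V$; write $A^{\mathbf i}:=A_1^{i_1}\cdots A_d^{i_d}$ for $\mathbf i\in\mathbb N^d$. Let $F\in V$ be such that $$\sup_{\mathbf n\in\mathbb N^d}\Big\|\sum_{\mathbf 0\preccurlyeq\mathbf i\preccurlyeq\mathbf n}A^{\mathbf i}F\Big\|<+\infty.$$ Then there exists $h\in V$ such that $F=\prod_{q=1}^d(\mathrm I-A_q)h$.
   Context: $\mathbb L^2$ is the space of square integrable functions on a probability space, $\|\cdot\|$ its norm; $\mathbb N=\{0,1,2,\dots\}$; $\preccurlyeq$ is the coordinatewise order on $\mathbb N^d$; $\mathbf 0=(0,\dots,0)$; $\mathrm I$ is the identity and products of operators are compositions. *)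

theory Defs
  imports "HOL-Probability.Probability"
begin

text \<open>Real L^2 of a probability space M, represented by functions; equality in L^2 is
  equality almost everywhere.\<close>

definition memL2 :: "'a measure \<Rightarrow> ('a \<Rightarrow> real) \<Rightarrow> bool" where
  "memL2 M f \<longleftrightarrow> f \<in> borel_measurable M \<and> integrable M (\<lambda>x. (f x)\<^sup>2)"

definition L2norm :: "'a measure \<Rightarrow> ('a \<Rightarrow> real) \<Rightarrow> real" where
  "L2norm M f = sqrt (\<integral>x. (f x)\<^sup>2 \<partial>M)"

definition ae_eq :: "'a measure \<Rightarrow> ('a \<Rightarrow> real) \<Rightarrow> ('a \<Rightarrow> real) \<Rightarrow> bool" where
  "ae_eq M f g \<longleftrightarrow> (AE x in M. f x = g x)"

text \<open>A closed linear subspace of L^2 (as a set of representatives, closed under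
  a.e. equality).\<close>
definition closed_L2_subspace :: "'a measure \<Rightarrow> ('a \<Rightarrow> real) set \<Rightarrow> bool" where
  "closed_L2_subspace M V \<longleftrightarrow>
     (\<forall>f\<in>V. memL2 M f) \<and> (\<lambda>x. 0) \<in> V \<and>
     (\<forall>f\<in>V. \<forall>g\<in>V. (\<lambda>x. f x + g x) \<in> V) \<and>
     (\<forall>c::real. \<forall>f\<in>V. (\<lambda>x. c * f x) \<in> V) \<and>
     (\<forall>f\<in>V. \<forall>g. memL2 M g \<and> ae_eq M f g \<longrightarrow> g \<in> V) \<and>
     (\<forall>u f. (\<forall>n. u n \<in> V) \<and> memL2 M f \<and>
            (\<lambda>n. L2norm M (\<lambda>x. u n x - f x)) \<longlonglongrightarrow> 0 \<longrightarrow> f \<in> V)"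

definition bounded_linear_op_on ::
  "'a measure \<Rightarrow> ('a \<Rightarrow> real) set \<Rightarrow> (('a \<Rightarrow> real) \<Rightarrow> ('a \<Rightarrow> real)) \<Rightarrow> bool" where
  "bounded_linear_op_on M V T \<longleftrightarrow>
     (\<forall>f\<in>V. T f \<in> V) \<and>
     (\<forall>f\<in>V. \<forall>g\<in>V. ae_eq M (T (\<lambda>x. f x + g x)) (\<lambda>x. T f x + T g x)) \<and>
     (\<forall>c::real. \<forall>f\<in>V. ae_eq M (T (\<lambda>x. c * f x)) (\<lambda>x. c * T f x)) \<and>
     (\<exists>C. \<forall>f\<in>V. L2norm M (T f) \<le> C * L2norm M f)"

text \<open>A^i = A_0^(i 0) \<circ> ... \<circ> A_(d-1)^(i (d-1)) (indices 0..d-1).\<close>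
fun mpow :: "(nat \<Rightarrow> ('b \<Rightarrow> 'b)) \<Rightarrow> nat \<Rightarrow> (nat \<Rightarrow> nat) \<Rightarrow> 'b \<Rightarrow> 'b" where
  "mpow A 0 i = id"
| "mpow A (Suc d) i = mpow A d i \<circ> (A d ^^ i d)"

fun prod_I_minus :: "(nat \<Rightarrow> (('a \<Rightarrow> real) \<Rightarrow> ('a \<Rightarrow> real))) \<Rightarrow> nat \<Rightarrow> ('a \<Rightarrow> real) \<Rightarrow> ('a \<Rightarrow> real)" where
  "prod_I_minus A 0 = id"
| "prod_I_minus A (Suc d) = prod_I_minus A d \<circ> (\<lambda>f x. f x - A d f x)"

end

theory Submission
  imports Defs
begin


lemma memL2_meas[measurable_dest]: "memL2 M f \<Longrightarrow> f \<in> borel_measurable M" by (simp add: memL2_def)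
lemma memL2_int: "memL2 M f \<Longrightarrow> integrable M (\<lambda>x. (f x)\<^sup>2)" by (simp add: memL2_def)

lemma sq_sum_le: "((a::real) + b)\<^sup>2 \<le> 2*a\<^sup>2 + 2*b\<^sup>2"
proof -
  have "0 \<le> (a - b)\<^sup>2" by simp
  thus ?thesis by (simp add: power2_eq_square algebra_simps)
qed

lemma memL2_add:
  assumes "memL2 M f" "memL2 M g" shows "memL2 M (\<lambda>x. f x + g x)"
proof -
  have [measurable]: "f \<in> borel_measurable M" "g \<in> borel_measurable M" using assms by (auto simp: memL2_def)
  have "integrable M (\<lambda>x. 2*(f x)\<^sup>2 + 2*(g x)\<^sup>2)" using assms by (auto simp: memL2_def)
  moreover have "AE x in M. norm ((f x + g x)\<^sup>2) \<le> norm (2*(f x)\<^sup>2 + 2*(g x)\<^sup>2)"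
    using sq_sum_le by auto
  ultimately show ?thesis unfolding memL2_def by (auto intro: Bochner_Integration.integrable_bound)
qed

lemma memL2_diff:
  assumes "memL2 M f" "memL2 M g" shows "memL2 M (\<lambda>x. f x - g x)"
proof -
  have [measurable]: "f \<in> borel_measurable M" "g \<in> borel_measurable M" using assms by (auto simp: memL2_def)
  have "integrable M (\<lambda>x. 2*(f x)\<^sup>2 + 2*(g x)\<^sup>2)" using assms by (auto simp: memL2_def)
  moreover have "AE x in M. norm ((f x - g x)\<^sup>2) \<le> norm (2*(f x)\<^sup>2 + 2*(g x)\<^sup>2)"
    using sq_sum_le[of "f x" "- g x" for x] by auto
  ultimately show ?thesis unfolding memL2_def by (auto intro: Bochner_Integration.integrable_bound)
qed

lemma memL2_scale:
  assumes "memL2 M f" shows "memL2 M (\<lambda>x. c * f x)"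
  using assms unfolding memL2_def by (auto simp: power_mult_distrib)

lemma memL2_zero: "memL2 M (\<lambda>x. 0)" by (simp add: memL2_def)

lemma memL2_const: "prob_space M \<Longrightarrow> memL2 M (\<lambda>x. c)"
  unfolding memL2_def by (auto intro!: finite_measure.integrable_const prob_space.finite_measure)

lemma memL2_sum: "finite I \<Longrightarrow> (\<And>i. i \<in> I \<Longrightarrow> memL2 M (f i)) \<Longrightarrow> memL2 M (\<lambda>x. \<Sum>i\<in>I. f i x)"
  by (induction I rule: finite_induct) (auto intro: memL2_add memL2_zero)

lemma integrable_L2_mult:
  assumes "memL2 M f" "memL2 M g" shows "integrable M (\<lambda>x. f x * g x)"
proof -
  have [measurable]: "f \<in> borel_measurable M" "g \<in> borel_measurable M" using assms by (auto simp: memL2_def)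
  have "integrable M (\<lambda>x. (f x)\<^sup>2 + (g x)\<^sup>2)" using assms by (auto simp: memL2_def)
  moreover have "norm (f x * g x) \<le> norm ((f x)\<^sup>2 + (g x)\<^sup>2)" for x
  proof -
    have "0 \<le> (\<bar>f x\<bar> - \<bar>g x\<bar>)\<^sup>2" by simp
    hence "2 * \<bar>f x\<bar> * \<bar>g x\<bar> \<le> (f x)\<^sup>2 + (g x)\<^sup>2"
      by (simp add: power2_eq_square algebra_simps)
    moreover have "\<bar>f x\<bar> * \<bar>g x\<bar> \<ge> 0" by simp
    moreover have "norm (f x * g x) = \<bar>f x\<bar> * \<bar>g x\<bar>" by (simp add: abs_mult)
    moreover have "norm ((f x)\<^sup>2 + (g x)\<^sup>2) = (f x)\<^sup>2 + (g x)\<^sup>2" by simp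
    ultimately show ?thesis by linarith
  qed
  ultimately show ?thesis by (auto intro: Bochner_Integration.integrable_bound)
qed

lemma L2norm_nonneg: "0 \<le> L2norm M f"
  unfolding L2norm_def by simp

lemma integral_sq_nonneg: "0 \<le> (\<integral>x. ((f::'a\<Rightarrow>real) x)\<^sup>2 \<partial>M)"
  by (intro Bochner_Integration.integral_nonneg) simp

lemma L2norm_sq: "(L2norm M f)\<^sup>2 = (\<integral>x. (f x)\<^sup>2 \<partial>M)"
  unfolding L2norm_def using integral_sq_nonneg[where f=f and M=M] by simp

lemma quad_disc:
  fixes a b c :: real
  assumes "\<And>t. 0 \<le> a + 2*t*b + t\<^sup>2*c" "0 \<le> c"
  shows "b\<^sup>2 \<le> a*c"
proof (cases "c = 0")
  case True
  show ?thesis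
  proof (rule ccontr)
    assume "\<not> ?thesis" then have "b \<noteq> 0" using True by simp
    have "0 \<le> a + 2*(-(a+1)/(2*b))*b + (-(a+1)/(2*b))\<^sup>2*c" using assms by blast
    then show False using True \<open>b\<noteq>0\<close> by (simp add: field_simps)
  qed
next
  case False
  hence c: "c > 0" using assms(2) by simp
  have "0 \<le> a + 2*(-b/c)*b + (-b/c)\<^sup>2*c" using assms(1) by blast
  hence "0 \<le> a - b\<^sup>2/c" using c by (simp add: power2_eq_square field_simps)
  thus ?thesis using c by (simp add: field_simps)
qed

lemma L2_CS:
  assumes f: "memL2 M f" and g: "memL2 M g"
  shows "\<bar>\<integral>x. f x * g x \<partial>M\<bar> \<le> L2norm M f * L2norm M g"
proof -
  define a where "a = (\<integral>x. (f x)\<^sup>2 \<partial>M)"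
  define b where "b = (\<integral>x. f x * g x \<partial>M)"
  define c where "c = (\<integral>x. (g x)\<^sup>2 \<partial>M)"
  have i1: "integrable M (\<lambda>x. (f x)\<^sup>2)" "integrable M (\<lambda>x. (g x)\<^sup>2)"
    using f g by (auto simp: memL2_def)
  have i2: "integrable M (\<lambda>x. f x * g x)" by (rule integrable_L2_mult[OF f g])
  have "0 \<le> a + 2*t*b + t\<^sup>2*c" for t
  proof -
    have "(\<integral>x. (f x + t * g x)\<^sup>2 \<partial>M) = (\<integral>x. (f x)\<^sup>2 + (2*t) * (f x * g x) + t\<^sup>2 * (g x)\<^sup>2 \<partial>M)"
      by (rule Bochner_Integration.integral_cong) (auto simp: power2_eq_square algebra_simps)
    also have "\<dots> = a + 2*t*b + t\<^sup>2*c"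
      unfolding a_def b_def c_def using i1 i2 by simp
    finally show ?thesis using integral_sq_nonneg[where f="\<lambda>x. f x + t * g x" and M=M] by simp
  qed
  moreover have "0 \<le> c" unfolding c_def by (rule integral_sq_nonneg)
  ultimately have "b\<^sup>2 \<le> a*c" by (rule quad_disc)
  hence "sqrt (b\<^sup>2) \<le> sqrt (a*c)" by (rule real_sqrt_le_mono)
  thus ?thesis unfolding L2norm_def a_def b_def c_def by (simp add: real_sqrt_mult)
qed

lemma L2norm_add:
  assumes f: "memL2 M f" and g: "memL2 M g"
  shows "L2norm M (\<lambda>x. f x + g x) \<le> L2norm M f + L2norm M g"
proof -
  have i1: "integrable M (\<lambda>x. (f x)\<^sup>2)" "integrable M (\<lambda>x. (g x)\<^sup>2)"
    using f g by (auto simp: memL2_def)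
  have i2: "integrable M (\<lambda>x. f x * g x)" by (rule integrable_L2_mult[OF f g])
  have "(\<integral>x. (f x + g x)\<^sup>2 \<partial>M) = (\<integral>x. (f x)\<^sup>2 + 2 * (f x * g x) + (g x)\<^sup>2 \<partial>M)"
    by (rule Bochner_Integration.integral_cong) (auto simp: power2_eq_square algebra_simps)
  also have "\<dots> = (\<integral>x. (f x)\<^sup>2 \<partial>M) + 2 * (\<integral>x. f x * g x \<partial>M) + (\<integral>x. (g x)\<^sup>2 \<partial>M)"
    using i1 i2 by simp
  also have "\<dots> \<le> (L2norm M f)\<^sup>2 + 2 * (L2norm M f * L2norm M g) + (L2norm M g)\<^sup>2"
    using L2_CS[OF f g] by (simp add: L2norm_sq)
  also have "\<dots> = (L2norm M f + L2norm M g)\<^sup>2" by (simp add: power2_eq_square algebra_simps)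
  finally have "(L2norm M (\<lambda>x. f x + g x))\<^sup>2 \<le> (L2norm M f + L2norm M g)\<^sup>2"
    by (simp add: L2norm_sq)
  thus ?thesis using L2norm_nonneg[of M f] L2norm_nonneg[of M g]
    by (meson add_nonneg_nonneg power2_le_imp_le)
qed

lemma L2norm_scale: "L2norm M (\<lambda>x. c * f x) = \<bar>c\<bar> * L2norm M f"
  unfolding L2norm_def by (simp add: power_mult_distrib real_sqrt_mult)

lemma L2norm_minus: "L2norm M (\<lambda>x. - f x) = L2norm M f"
  unfolding L2norm_def by simp

lemma L2norm_commute: "L2norm M (\<lambda>x. f x - g x) = L2norm M (\<lambda>x. g x - f x)"
  unfolding L2norm_def by (simp add: power2_commute)

lemma L2norm_diff:
  assumes f: "memL2 M f" and g: "memL2 M g"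
  shows "L2norm M (\<lambda>x. f x - g x) \<le> L2norm M f + L2norm M g"
  using L2norm_add[OF f memL2_scale[OF g, of "-1"]] by (simp add: L2norm_scale L2norm_minus)

lemma L2norm_tri:
  assumes "memL2 M f" "memL2 M g" "memL2 M h"
  shows "L2norm M (\<lambda>x. f x - h x) \<le> L2norm M (\<lambda>x. f x - g x) + L2norm M (\<lambda>x. g x - h x)"
  using L2norm_add[OF memL2_diff[OF assms(1,2)] memL2_diff[OF assms(2,3)]] by simp

lemma L2norm_sum:
  assumes "finite I" "\<And>i. i \<in> I \<Longrightarrow> memL2 M (f i)"
  shows "L2norm M (\<lambda>x. \<Sum>i\<in>I. f i x) \<le> (\<Sum>i\<in>I. L2norm M (f i))"
  using assms
proof (induction I rule: finite_induct)
  case empty then show ?case by (simp add: L2norm_def)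
next
  case (insert j I)
  have "L2norm M (\<lambda>x. \<Sum>i\<in>insert j I. f i x) = L2norm M (\<lambda>x. f j x + (\<Sum>i\<in>I. f i x))"
    using insert by simp
  also have "\<dots> \<le> L2norm M (f j) + L2norm M (\<lambda>x. \<Sum>i\<in>I. f i x)"
    using L2norm_add[of M "f j" "\<lambda>x. \<Sum>i\<in>I. f i x"] insert memL2_sum[of I M f] by auto
  also have "\<dots> \<le> (\<Sum>i\<in>insert j I. L2norm M (f i))" using insert by simp
  finally show ?case .
qed

lemma L2norm_ae:
  assumes "memL2 M f" "memL2 M g" "ae_eq M f g"
  shows "L2norm M f = L2norm M g"
proof -
  have [measurable]: "f \<in> borel_measurable M" "g \<in> borel_measurable M" using assms by (auto simp: memL2_def)
  have "(\<integral>x. (f x)\<^sup>2 \<partial>M) = (\<integral>x. (g x)\<^sup>2 \<partial>M)"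
    by (rule integral_cong_AE) (use assms(3) in \<open>auto simp: ae_eq_def\<close>)
  thus ?thesis by (simp add: L2norm_def)
qed

lemma L2norm_eq0:
  assumes "memL2 M f" "L2norm M f = 0"
  shows "ae_eq M f (\<lambda>x. 0)"
proof -
  have "(\<integral>x. (f x)\<^sup>2 \<partial>M) = 0" using assms(2) integral_sq_nonneg[where f=f and M=M] by (simp add: L2norm_def)
  hence "AE x in M. (f x)\<^sup>2 = 0"
    using integral_nonneg_eq_0_iff_AE[of M "\<lambda>x. (f x)\<^sup>2"] assms(1) by (simp add: memL2_def)
  thus ?thesis unfolding ae_eq_def by simp
qed

lemma L2norm_parallelogram:
  assumes f: "memL2 M f" and g: "memL2 M g"
  shows "(L2norm M (\<lambda>x. f x + g x))\<^sup>2 + (L2norm M (\<lambda>x. f x - g x))\<^sup>2 = 2 * (L2norm M f)\<^sup>2 + 2 * (L2norm M g)\<^sup>2"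
proof -
  have i1: "integrable M (\<lambda>x. (f x)\<^sup>2)" "integrable M (\<lambda>x. (g x)\<^sup>2)"
    using f g by (auto simp: memL2_def)
  have i3: "integrable M (\<lambda>x. (f x + g x)\<^sup>2)" "integrable M (\<lambda>x. (f x - g x)\<^sup>2)"
    using memL2_add[OF f g] memL2_diff[OF f g] by (auto simp: memL2_def)
  have "(\<integral>x. (f x + g x)\<^sup>2 \<partial>M) + (\<integral>x. (f x - g x)\<^sup>2 \<partial>M) = (\<integral>x. (f x + g x)\<^sup>2 + (f x - g x)\<^sup>2 \<partial>M)"
    using i3 by simp
  also have "\<dots> = (\<integral>x. 2 * (f x)\<^sup>2 + 2 * (g x)\<^sup>2 \<partial>M)"
    by (rule Bochner_Integration.integral_cong) (auto simp: power2_eq_square algebra_simps)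
  also have "\<dots> = 2 * (\<integral>x. (f x)\<^sup>2 \<partial>M) + 2 * (\<integral>x. (g x)\<^sup>2 \<partial>M)" using i1 by simp
  finally show ?thesis by (simp add: L2norm_sq)
qed

lemma L1_le_L2:
  assumes "prob_space M" "memL2 M f"
  shows "(\<integral>\<^sup>+x. ennreal \<bar>f x\<bar> \<partial>M) \<le> ennreal (L2norm M f)"
proof -
  have one: "memL2 M (\<lambda>x. 1)" by (rule memL2_const[OF assms(1)])
  have [measurable]: "f \<in> borel_measurable M" using assms(2) by (simp add: memL2_def)
  have fa: "memL2 M (\<lambda>x. \<bar>f x\<bar>)" using assms(2) by (simp add: memL2_def)
  have i: "integrable M (\<lambda>x. \<bar>f x\<bar> * 1)" by (rule integrable_L2_mult[OF fa one])
  have "(\<integral>\<^sup>+x. ennreal \<bar>f x\<bar> \<partial>M) = ennreal (\<integral>x. \<bar>f x\<bar> \<partial>M)"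
    using i by (intro nn_integral_eq_integral) auto
  also have "(\<integral>x. \<bar>f x\<bar> \<partial>M) \<le> L2norm M f"
  proof -
    have "\<bar>\<integral>x. \<bar>f x\<bar> * 1 \<partial>M\<bar> \<le> L2norm M (\<lambda>x. \<bar>f x\<bar>) * L2norm M (\<lambda>x. 1)"
      by (rule L2_CS[OF fa one])
    moreover have "L2norm M (\<lambda>x. 1) = 1"
      using assms(1) by (simp add: L2norm_def prob_space.prob_space)
    moreover have "L2norm M (\<lambda>x. \<bar>f x\<bar>) = L2norm M f" by (simp add: L2norm_def)
    ultimately show ?thesis by simp
  qed
  hence "ennreal (\<integral>x. \<bar>f x\<bar> \<partial>M) \<le> ennreal (L2norm M f)" by (rule ennreal_leI)
  finally show ?thesis .
qed


lemma geom_half_sum: "(\<Sum>j<K. (1/2::real)^(k+j)) \<le> 2*(1/2)^k"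
proof -
  have "(\<Sum>j<K. (1/2::real)^(k+j)) = (1/2)^k * (\<Sum>j<K. (1/2)^j)"
    by (simp add: power_add sum_distrib_left)
  also have "(\<Sum>j<K. (1/2::real)^j) = (1 - (1/2)^K) / (1 - 1/2)"
    by (simp add: sum_gp_strict)
  also have "\<dots> \<le> 2" by simp
  finally show ?thesis by (simp add: mult.commute mult_left_mono)
qed

lemma fast_cauchy_bound:
  assumes g: "\<And>k. memL2 M (g k)"
    and d: "\<And>k. L2norm M (\<lambda>x. g (Suc k) x - g k x) \<le> (1/2)^k"
  shows "L2norm M (\<lambda>x. g (k+K) x - g k x) \<le> 2*(1/2)^k"
proof -
  have eq: "(\<lambda>x. g (k+K) x - g k x) = (\<lambda>x. \<Sum>j<K. (g (Suc (k+j)) x - g (k+j) x))"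
    using sum_lessThan_telescope[of "\<lambda>j. g (k+j) x" K for x] by simp
  have "L2norm M (\<lambda>x. \<Sum>j<K. (g (Suc (k+j)) x - g (k+j) x)) \<le> (\<Sum>j<K. L2norm M (\<lambda>x. g (Suc (k+j)) x - g (k+j) x))"
    by (rule L2norm_sum) (auto intro: memL2_diff g)
  also have "\<dots> \<le> (\<Sum>j<K. (1/2::real)^(k+j))" by (intro sum_mono d)
  also have "\<dots> \<le> 2*(1/2)^k" by (rule geom_half_sum)
  finally show ?thesis using eq by simp
qed

lemma L2_fast_cauchy:
  assumes P: "prob_space M"
    and g: "\<And>k. memL2 M (g k)"
    and d: "\<And>k. L2norm M (\<lambda>x. g (Suc k) x - g k x) \<le> (1/2)^k"
  shows "\<exists>f. memL2 M f \<and> (\<forall>k. L2norm M (\<lambda>x. f x - g k x) \<le> 2*(1/2)^k)"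
proof -
  have [measurable]: "\<And>k. g k \<in> borel_measurable M" using g by (simp add: memL2_def)
  define D where "D j x = \<bar>g (Suc j) x - g j x\<bar>" for j x
  have [measurable]: "\<And>j. D j \<in> borel_measurable M" unfolding D_def by measurable
  have intD: "(\<integral>\<^sup>+x. ennreal (D j x) \<partial>M) \<le> ennreal ((1/2)^j)" for j
  proof -
    have "(\<integral>\<^sup>+x. ennreal (D j x) \<partial>M) \<le> ennreal (L2norm M (\<lambda>x. g (Suc j) x - g j x))"
      unfolding D_def by (rule L1_le_L2[OF P memL2_diff[OF g g]])
    also have "\<dots> \<le> ennreal ((1/2)^j)" by (rule ennreal_leI[OF d])
    finally show ?thesis .
  qed
  have "(\<integral>\<^sup>+x. (\<Sum>j. ennreal (D j x)) \<partial>M) = (\<Sum>j. \<integral>\<^sup>+x. ennreal (D j x) \<partial>M)"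
    by (rule nn_integral_suminf) measurable
  also have "\<dots> \<le> (\<Sum>j. ennreal ((1/2)^j))"
    by (intro suminf_le intD summableI)
  also have "\<dots> = ennreal (\<Sum>j. (1/2)^j)"
    by (rule suminf_ennreal2) auto
  finally have le: "(\<integral>\<^sup>+x. (\<Sum>j. ennreal (D j x)) \<partial>M) \<le> ennreal (\<Sum>j. (1/2::real)^j)" .
  have "(\<integral>\<^sup>+x. (\<Sum>j. ennreal (D j x)) \<partial>M) \<noteq> \<infinity>"
    using neq_top_trans[OF ennreal_neq_top le] by simp
  hence "AE x in M. (\<Sum>j. ennreal (D j x)) \<noteq> \<infinity>"
    by (intro nn_integral_noteq_infinite) measurable
  hence conv: "AE x in M. (\<lambda>k. g k x) \<longlonglongrightarrow> lim (\<lambda>k. g k x)"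
  proof eventually_elim
    case (elim x)
    have "summable (\<lambda>j. D j x)"
      by (rule summable_suminf_not_top) (use elim in \<open>auto simp: D_def\<close>)
    hence "summable (\<lambda>j. g (Suc j) x - g j x)"
      unfolding D_def by (rule summable_rabs_cancel)
    hence "(\<lambda>n. \<Sum>j<n. g (Suc j) x - g j x) \<longlonglongrightarrow> (\<Sum>j. g (Suc j) x - g j x)"
      by (rule summable_LIMSEQ)
    hence "(\<lambda>n. g n x - g 0 x) \<longlonglongrightarrow> (\<Sum>j. g (Suc j) x - g j x)"
      using sum_lessThan_telescope[of "\<lambda>j. g j x"] by simp
    hence "(\<lambda>n. (g n x - g 0 x) + g 0 x) \<longlonglongrightarrow> (\<Sum>j. g (Suc j) x - g j x) + g 0 x"
      by (intro tendsto_add tendsto_const)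
    hence "convergent (\<lambda>n. g n x)" by (auto simp: convergent_def)
    thus ?case by (simp add: convergent_LIMSEQ_iff)
  qed
  define f where "f x = lim (\<lambda>k. g k x)" for x
  have fm[measurable]: "f \<in> borel_measurable M" unfolding f_def by measurable
  have bound: "(\<integral>\<^sup>+x. ennreal ((f x - g k x)\<^sup>2) \<partial>M) \<le> ennreal ((2*(1/2)^k)\<^sup>2)" for k
  proof -
    define u where "u K x = ennreal ((g (k+K) x - g k x)\<^sup>2)" for K x
    have [measurable]: "\<And>K. u K \<in> borel_measurable M" unfolding u_def by measurable
    have "AE x in M. liminf (\<lambda>K. u K x) = ennreal ((f x - g k x)\<^sup>2)"
      using conv
    proof eventually_elim
      case (elim x)
      have "(\<lambda>K. g (K + k) x) \<longlonglongrightarrow> f x" unfolding f_def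
        using LIMSEQ_ignore_initial_segment[OF elim, of k] by simp
      hence "(\<lambda>K. u K x) \<longlonglongrightarrow> ennreal ((f x - g k x)\<^sup>2)" unfolding u_def
        by (intro tendsto_ennrealI tendsto_intros) (simp add: add.commute)
      thus ?case by (simp add: lim_imp_Liminf)
    qed
    hence "(\<integral>\<^sup>+x. ennreal ((f x - g k x)\<^sup>2) \<partial>M) = (\<integral>\<^sup>+x. liminf (\<lambda>K. u K x) \<partial>M)"
      by (intro nn_integral_cong_AE) (auto elim: eventually_mono)
    also have "\<dots> \<le> liminf (\<lambda>K. \<integral>\<^sup>+x. u K x \<partial>M)"
      by (rule nn_integral_liminf) simp
    also have "\<dots> \<le> ennreal ((2*(1/2)^k)\<^sup>2)"
    proof (rule Liminf_le)
      show "\<forall>\<^sub>F K in sequentially. (\<integral>\<^sup>+x. u K x \<partial>M) \<le> ennreal ((2*(1/2)^k)\<^sup>2)"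
      proof (intro always_eventually allI)
        fix K
        have m: "memL2 M (\<lambda>x. g (k+K) x - g k x)" by (intro memL2_diff g)
        have "(\<integral>\<^sup>+x. u K x \<partial>M) = ennreal (\<integral>x. (g (k+K) x - g k x)\<^sup>2 \<partial>M)"
          unfolding u_def using m by (intro nn_integral_eq_integral) (auto simp: memL2_def)
        also have "\<dots> = ennreal ((L2norm M (\<lambda>x. g (k+K) x - g k x))\<^sup>2)" by (simp add: L2norm_sq)
        also have "\<dots> \<le> ennreal ((2*(1/2)^k)\<^sup>2)"
          using fast_cauchy_bound[OF g d, of k K] L2norm_nonneg
          by (intro ennreal_leI power_mono) auto
        finally show "(\<integral>\<^sup>+x. u K x \<partial>M) \<le> ennreal ((2*(1/2)^k)\<^sup>2)" .
      qed
    qed simp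
    finally show ?thesis .
  qed
  have mk: "memL2 M (\<lambda>x. f x - g k x)" for k
  proof -
    have "integrable M (\<lambda>x. (f x - g k x)\<^sup>2)"
    proof (rule integrableI_bounded)
      show "(\<lambda>x. (f x - g k x)\<^sup>2) \<in> borel_measurable M" by measurable
      have "(\<integral>\<^sup>+x. ennreal (norm ((f x - g k x)\<^sup>2)) \<partial>M) = (\<integral>\<^sup>+x. ennreal ((f x - g k x)\<^sup>2) \<partial>M)"
        by simp
      also have "\<dots> < \<infinity>" using bound[of k] by (simp add: le_less_trans)
      finally show "(\<integral>\<^sup>+x. ennreal (norm ((f x - g k x)\<^sup>2)) \<partial>M) < \<infinity>" .
    qed
    thus ?thesis unfolding memL2_def by simp
  qed
  have "memL2 M (\<lambda>x. (f x - g 0 x) + g 0 x)" by (intro memL2_add mk g)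
  hence mf: "memL2 M f" by simp
  have "L2norm M (\<lambda>x. f x - g k x) \<le> 2*(1/2)^k" for k
  proof -
    have "ennreal (\<integral>x. (f x - g k x)\<^sup>2 \<partial>M) = (\<integral>\<^sup>+x. ennreal ((f x - g k x)\<^sup>2) \<partial>M)"
      using mk[of k] by (intro nn_integral_eq_integral[symmetric]) (auto simp: memL2_def)
    also have "\<dots> \<le> ennreal ((2*(1/2)^k)\<^sup>2)" by (rule bound)
    finally have "(\<integral>x. (f x - g k x)\<^sup>2 \<partial>M) \<le> (2*(1/2)^k)\<^sup>2"
      by (subst (asm) ennreal_le_iff) auto
    hence "sqrt (\<integral>x. (f x - g k x)\<^sup>2 \<partial>M) \<le> sqrt ((2*(1/2)^k)\<^sup>2)" by (rule real_sqrt_le_mono)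
    also have "sqrt ((2*(1/2::real)^k)\<^sup>2) = 2*(1/2)^k" by (intro real_sqrt_unique) auto
    finally show ?thesis by (simp only: L2norm_def)
  qed
  with mf show ?thesis by blast
qed


lemma L2_complete:
  assumes P: "prob_space M" and u: "\<And>n. memL2 M (u n)"
    and C: "\<And>e. e > 0 \<Longrightarrow> \<exists>N. \<forall>m\<ge>N. \<forall>n\<ge>N. L2norm M (\<lambda>x. u m x - u n x) < e"
  shows "\<exists>f. memL2 M f \<and> (\<lambda>n. L2norm M (\<lambda>x. u n x - f x)) \<longlonglongrightarrow> 0"
proof -
  have "\<forall>k. \<exists>N. \<forall>m\<ge>N. \<forall>n\<ge>N. L2norm M (\<lambda>x. u m x - u n x) < (1/2)^k" using C by simp
  then obtain N where N: "\<And>k m n. m \<ge> N k \<Longrightarrow> n \<ge> N k \<Longrightarrow> L2norm M (\<lambda>x. u m x - u n x) < (1/2)^k"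
    by metis
  define r where "r k = (\<Sum>j\<le>k. N j)" for k
  have rN: "N k \<le> r k" for k unfolding r_def by (rule member_le_sum) auto
  have rmono: "r k \<le> r (Suc k)" for k unfolding r_def by simp
  define g where "g k = u (r k)" for k
  have g: "memL2 M (g k)" for k unfolding g_def by (rule u)
  have d: "L2norm M (\<lambda>x. g (Suc k) x - g k x) \<le> (1/2)^k" for k
    unfolding g_def using N[of k "r (Suc k)" "r k"] rN[of k] rmono[of k] by simp
  obtain f where mf: "memL2 M f" and fb: "\<And>k. L2norm M (\<lambda>x. f x - g k x) \<le> 2*(1/2)^k"
    using L2_fast_cauchy[OF P g d] by blast
  have "(\<lambda>n. L2norm M (\<lambda>x. u n x - f x)) \<longlonglongrightarrow> 0"
  proof (rule LIMSEQ_I)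
    fix e :: real assume e: "0 < e"
    obtain k where k: "(1/2::real)^k < e/3" using real_arch_pow_inv[of "e/3" "1/2"] e by auto
    have "\<forall>n\<ge>N k. norm (L2norm M (\<lambda>x. u n x - f x) - 0) < e"
    proof (intro allI impI)
      fix n assume n: "n \<ge> N k"
      have "L2norm M (\<lambda>x. u n x - f x) \<le> L2norm M (\<lambda>x. u n x - g k x) + L2norm M (\<lambda>x. g k x - f x)"
        by (rule L2norm_tri[OF u g mf])
      also have "L2norm M (\<lambda>x. g k x - f x) = L2norm M (\<lambda>x. f x - g k x)" by (rule L2norm_commute)
      also have "L2norm M (\<lambda>x. u n x - g k x) < (1/2)^k"
        unfolding g_def using N[of k n "r k"] n rN[of k] by simp
      finally have "L2norm M (\<lambda>x. u n x - f x) < (1/2)^k + 2*(1/2)^k" using fb[of k] by simp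
      thus "norm (L2norm M (\<lambda>x. u n x - f x) - 0) < e" using k L2norm_nonneg[of M] by simp
    qed
    thus "\<exists>no. \<forall>n\<ge>no. norm (L2norm M (\<lambda>x. u n x - f x) - 0) < e" by blast
  qed
  with mf show ?thesis by blast
qed

lemma ae_refl: "ae_eq M f f" by (simp add: ae_eq_def)
lemma ae_sym: "ae_eq M f g \<Longrightarrow> ae_eq M g f" by (auto simp: ae_eq_def elim: eventually_mono)
lemma ae_trans[trans]: "ae_eq M f g \<Longrightarrow> ae_eq M g h \<Longrightarrow> ae_eq M f h"
  unfolding ae_eq_def by (erule (1) eventually_elim2) simp
lemma ae_eqI: "f = g \<Longrightarrow> ae_eq M f g" by (simp add: ae_eq_def)
lemma ae_add: "ae_eq M f f' \<Longrightarrow> ae_eq M g g' \<Longrightarrow> ae_eq M (\<lambda>x. f x + g x) (\<lambda>x. f' x + g' x)"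
  unfolding ae_eq_def by (erule (1) eventually_elim2) simp
lemma ae_diff: "ae_eq M f f' \<Longrightarrow> ae_eq M g g' \<Longrightarrow> ae_eq M (\<lambda>x. f x - g x) (\<lambda>x. f' x - g' x)"
  unfolding ae_eq_def by (erule (1) eventually_elim2) simp
lemma ae_scale: "ae_eq M f f' \<Longrightarrow> ae_eq M (\<lambda>x. c * f x) (\<lambda>x. c * f' x)"
  unfolding ae_eq_def by (auto elim: eventually_mono)
lemma ae_sum: "finite I \<Longrightarrow> (\<And>i. i \<in> I \<Longrightarrow> ae_eq M (f i) (g i)) \<Longrightarrow>
   ae_eq M (\<lambda>x. \<Sum>i\<in>I. f i x) (\<lambda>x. \<Sum>i\<in>I. g i x)"
proof (induction I rule: finite_induct)
  case empty then show ?case by (simp add: ae_refl)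
next
  case (insert j I)
  have "ae_eq M (\<lambda>x. f j x + (\<Sum>i\<in>I. f i x)) (\<lambda>x. g j x + (\<Sum>i\<in>I. g i x))"
    using insert by (intro ae_add) auto
  thus ?case using insert by simp
qed

locale L2sp =
  fixes M :: "'a measure" and V :: "('a \<Rightarrow> real) set"
  assumes cs: "closed_L2_subspace M V" and P: "prob_space M"
begin

lemma cs_mem: "f \<in> V \<Longrightarrow> memL2 M f" using cs unfolding closed_L2_subspace_def by blast
lemma cs_zero: "(\<lambda>x. 0) \<in> V" using cs unfolding closed_L2_subspace_def by blast
lemma cs_add: "f \<in> V \<Longrightarrow> g \<in> V \<Longrightarrow> (\<lambda>x. f x + g x) \<in> V" using cs unfolding closed_L2_subspace_def by blast
lemma cs_scale: "f \<in> V \<Longrightarrow> (\<lambda>x. c * f x) \<in> V" using cs unfolding closed_L2_subspace_def by blast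
lemma cs_diff: "f \<in> V \<Longrightarrow> g \<in> V \<Longrightarrow> (\<lambda>x. f x - g x) \<in> V"
  using cs_add[of f "\<lambda>x. (-1) * g x"] cs_scale[of g "-1"] by simp
lemma cs_ae: "f \<in> V \<Longrightarrow> memL2 M g \<Longrightarrow> ae_eq M f g \<Longrightarrow> g \<in> V"
  using cs unfolding closed_L2_subspace_def by blast
lemma cs_lim: "(\<And>n. u n \<in> V) \<Longrightarrow> memL2 M f \<Longrightarrow> (\<lambda>n. L2norm M (\<lambda>x. u n x - f x)) \<longlonglongrightarrow> 0 \<Longrightarrow> f \<in> V"
  using cs unfolding closed_L2_subspace_def by blast
lemma cs_sum: "finite I \<Longrightarrow> (\<And>i. i \<in> I \<Longrightarrow> f i \<in> V) \<Longrightarrow> (\<lambda>x. \<Sum>i\<in>I. f i x) \<in> V"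
  by (induction I rule: finite_induct) (auto intro: cs_add cs_zero)

lemma cs_normeq: "f \<in> V \<Longrightarrow> g \<in> V \<Longrightarrow> ae_eq M f g \<Longrightarrow> L2norm M f = L2norm M g"
  by (intro L2norm_ae cs_mem)

abbreviation "blo T \<equiv> bounded_linear_op_on M V T"

lemma blo_in: "blo T \<Longrightarrow> f \<in> V \<Longrightarrow> T f \<in> V" by (simp add: bounded_linear_op_on_def)
lemma blo_add: "blo T \<Longrightarrow> f \<in> V \<Longrightarrow> g \<in> V \<Longrightarrow> ae_eq M (T (\<lambda>x. f x + g x)) (\<lambda>x. T f x + T g x)"
  by (simp add: bounded_linear_op_on_def)
lemma blo_scale: "blo T \<Longrightarrow> f \<in> V \<Longrightarrow> ae_eq M (T (\<lambda>x. c * f x)) (\<lambda>x. c * T f x)"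
  by (simp add: bounded_linear_op_on_def)
lemma blo_bound: "blo T \<Longrightarrow> \<exists>C\<ge>0. \<forall>f\<in>V. L2norm M (T f) \<le> C * L2norm M f"
proof -
  assume "blo T"
  then obtain C where C: "\<forall>f\<in>V. L2norm M (T f) \<le> C * L2norm M f" by (auto simp: bounded_linear_op_on_def)
  have "\<forall>f\<in>V. L2norm M (T f) \<le> max C 0 * L2norm M f"
  proof
    fix f assume "f \<in> V"
    hence "L2norm M (T f) \<le> C * L2norm M f" using C by blast
    also have "\<dots> \<le> max C 0 * L2norm M f" by (intro mult_right_mono L2norm_nonneg) simp
    finally show "L2norm M (T f) \<le> max C 0 * L2norm M f" .
  qed
  thus ?thesis by (intro exI[of _ "max C 0"]) simp
qed

lemma blo_diff: "blo T \<Longrightarrow> f \<in> V \<Longrightarrow> g \<in> V \<Longrightarrow> ae_eq M (T (\<lambda>x. f x - g x)) (\<lambda>x. T f x - T g x)"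
proof -
  assume T: "blo T" and f: "f \<in> V" and g: "g \<in> V"
  have g': "(\<lambda>x. (-1) * g x) \<in> V" using cs_scale[OF g] .
  have "ae_eq M (T (\<lambda>x. f x + (\<lambda>x. (-1) * g x) x)) (\<lambda>x. T f x + T (\<lambda>x. (-1) * g x) x)"
    by (rule blo_add[OF T f g'])
  moreover have "ae_eq M (\<lambda>x. T f x + T (\<lambda>x. (-1) * g x) x) (\<lambda>x. T f x + (-1) * T g x)"
    by (intro ae_add ae_refl blo_scale[OF T g])
  ultimately have "ae_eq M (T (\<lambda>x. f x + (-1) * g x)) (\<lambda>x. T f x + (-1) * T g x)"
    by (rule ae_trans)
  thus ?thesis by simp
qed

lemma blo_cong: "blo T \<Longrightarrow> f \<in> V \<Longrightarrow> g \<in> V \<Longrightarrow> ae_eq M f g \<Longrightarrow> ae_eq M (T f) (T g)"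
proof -
  assume T: "blo T" and f: "f \<in> V" and g: "g \<in> V" and fg: "ae_eq M f g"
  have h: "(\<lambda>x. f x - g x) \<in> V" by (rule cs_diff[OF f g])
  have "ae_eq M (\<lambda>x. f x - g x) (\<lambda>x. 0)" using fg unfolding ae_eq_def by (auto elim: eventually_mono)
  hence "L2norm M (\<lambda>x. f x - g x) = L2norm M (\<lambda>x. 0)" by (intro cs_normeq h cs_zero)
  hence h0: "L2norm M (\<lambda>x. f x - g x) = 0" by (simp add: L2norm_def)
  obtain C where "C \<ge> 0" "\<forall>f\<in>V. L2norm M (T f) \<le> C * L2norm M f" using blo_bound[OF T] by blast
  hence "L2norm M (T (\<lambda>x. f x - g x)) \<le> C * L2norm M (\<lambda>x. f x - g x)" using h by blast
  hence "L2norm M (T (\<lambda>x. f x - g x)) \<le> 0" using h0 by simp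
  hence "L2norm M (T (\<lambda>x. f x - g x)) = 0" using L2norm_nonneg[of M] by (simp add: order_antisym)
  hence "ae_eq M (T (\<lambda>x. f x - g x)) (\<lambda>x. 0)" by (intro L2norm_eq0 cs_mem blo_in[OF T h])
  hence "ae_eq M (\<lambda>x. T f x - T g x) (\<lambda>x. 0)" using ae_trans[OF ae_sym[OF blo_diff[OF T f g]]] by blast
  thus ?thesis unfolding ae_eq_def by (auto elim: eventually_mono)
qed

lemma blo_sum:
  assumes T: "blo T"
  shows "finite I \<Longrightarrow> (\<And>i. i \<in> I \<Longrightarrow> f i \<in> V) \<Longrightarrow>
   ae_eq M (T (\<lambda>x. \<Sum>i\<in>I. f i x)) (\<lambda>x. \<Sum>i\<in>I. T (f i) x)"
proof (induction I rule: finite_induct)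
  case empty
  have "ae_eq M (T (\<lambda>x. 0 * 0)) (\<lambda>x. 0 * T (\<lambda>x. 0) x)" by (rule blo_scale[OF T cs_zero])
  then show ?case by simp
next
  case (insert j I)
  have "ae_eq M (T (\<lambda>x. f j x + (\<Sum>i\<in>I. f i x))) (\<lambda>x. T (f j) x + T (\<lambda>x. \<Sum>i\<in>I. f i x) x)"
    using insert by (intro blo_add[OF T] cs_sum) auto
  moreover have "ae_eq M (\<lambda>x. T (f j) x + T (\<lambda>x. \<Sum>i\<in>I. f i x) x) (\<lambda>x. T (f j) x + (\<Sum>i\<in>I. T (f i) x))"
    using insert by (intro ae_add ae_refl) auto
  ultimately have "ae_eq M (T (\<lambda>x. f j x + (\<Sum>i\<in>I. f i x))) (\<lambda>x. T (f j) x + (\<Sum>i\<in>I. T (f i) x))"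
    by (rule ae_trans)
  thus ?case using insert by simp
qed

lemma blo_id: "blo id"
  unfolding bounded_linear_op_on_def by (simp add: ae_refl) (rule exI[of _ 1], simp)

lemma blo_comp: "blo S \<Longrightarrow> blo T \<Longrightarrow> blo (S \<circ> T)"
proof -
  assume S: "blo S" and T: "blo T"
  obtain CS where CS: "CS \<ge> 0" "\<forall>f\<in>V. L2norm M (S f) \<le> CS * L2norm M f" using blo_bound[OF S] by blast
  obtain CT where CT: "CT \<ge> 0" "\<forall>f\<in>V. L2norm M (T f) \<le> CT * L2norm M f" using blo_bound[OF T] by blast
  have D: "\<exists>C. \<forall>f\<in>V. L2norm M ((S \<circ> T) f) \<le> C * L2norm M f"
  proof (intro exI ballI)
    fix f assume f: "f \<in> V"
    have "L2norm M (S (T f)) \<le> CS * L2norm M (T f)" using CS blo_in[OF T f] by blast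
    also have "\<dots> \<le> CS * (CT * L2norm M f)" using CT f CS(1) by (intro mult_left_mono) auto
    finally show "L2norm M ((S \<circ> T) f) \<le> (CS * CT) * L2norm M f" by simp
  qed
  have B: "\<forall>f\<in>V. \<forall>g\<in>V. ae_eq M ((S \<circ> T) (\<lambda>x. f x + g x)) (\<lambda>x. (S \<circ> T) f x + (S \<circ> T) g x)"
  proof (intro ballI)
    fix f g assume f: "f \<in> V" and g: "g \<in> V"
    have "ae_eq M (S (T (\<lambda>x. f x + g x))) (S (\<lambda>x. T f x + T g x))"
      using blo_add[OF T f g] by (intro blo_cong[OF S] blo_in[OF T] cs_add f g)
    also have "ae_eq M (S (\<lambda>x. T f x + T g x)) (\<lambda>x. S (T f) x + S (T g) x)"
      by (intro blo_add[OF S] blo_in[OF T] f g)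
    finally show "ae_eq M ((S \<circ> T) (\<lambda>x. f x + g x)) (\<lambda>x. (S \<circ> T) f x + (S \<circ> T) g x)" by simp
  qed
  have Cc: "\<forall>c. \<forall>f\<in>V. ae_eq M ((S \<circ> T) (\<lambda>x. c * f x)) (\<lambda>x. c * (S \<circ> T) f x)"
  proof (intro allI ballI)
    fix c f assume f: "f \<in> V"
    have "ae_eq M (S (T (\<lambda>x. c * f x))) (S (\<lambda>x. c * T f x))"
      using blo_scale[OF T f] by (intro blo_cong[OF S] blo_in[OF T] cs_scale f)
    also have "ae_eq M (S (\<lambda>x. c * T f x)) (\<lambda>x. c * S (T f) x)"
      by (intro blo_scale[OF S] blo_in[OF T] f)
    finally show "ae_eq M ((S \<circ> T) (\<lambda>x. c * f x)) (\<lambda>x. c * (S \<circ> T) f x)" by simp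
  qed
  have A: "\<forall>f\<in>V. (S \<circ> T) f \<in> V" using blo_in[OF S] blo_in[OF T] by simp
  show ?thesis unfolding bounded_linear_op_on_def using A B Cc D by (intro conjI)
qed

lemma blo_minus: "blo S \<Longrightarrow> blo T \<Longrightarrow> blo (\<lambda>f x. S f x - T f x)"
proof -
  assume S: "blo S" and T: "blo T"
  obtain CS where CS: "CS \<ge> 0" "\<forall>f\<in>V. L2norm M (S f) \<le> CS * L2norm M f" using blo_bound[OF S] by blast
  obtain CT where CT: "CT \<ge> 0" "\<forall>f\<in>V. L2norm M (T f) \<le> CT * L2norm M f" using blo_bound[OF T] by blast
  have D: "\<exists>C. \<forall>f\<in>V. L2norm M (\<lambda>x. S f x - T f x) \<le> C * L2norm M f"
  proof (intro exI ballI)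
    fix f assume f: "f \<in> V"
    have "L2norm M (\<lambda>x. S f x - T f x) \<le> L2norm M (S f) + L2norm M (T f)"
      by (rule L2norm_diff[OF cs_mem[OF blo_in[OF S f]] cs_mem[OF blo_in[OF T f]]])
    also have "\<dots> \<le> CS * L2norm M f + CT * L2norm M f" using CS CT f by (intro add_mono) auto
    finally show "L2norm M (\<lambda>x. S f x - T f x) \<le> (CS + CT) * L2norm M f" by (simp add: algebra_simps)
  qed
  have B: "\<forall>f\<in>V. \<forall>g\<in>V. ae_eq M (\<lambda>x. S (\<lambda>x. f x + g x) x - T (\<lambda>x. f x + g x) x)
       (\<lambda>x. (S f x - T f x) + (S g x - T g x))"
  proof (intro ballI)
    fix f g assume f: "f \<in> V" and g: "g \<in> V"
    have "ae_eq M (\<lambda>x. S (\<lambda>x. f x + g x) x - T (\<lambda>x. f x + g x) x)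
       (\<lambda>x. (S f x + S g x) - (T f x + T g x))"
      by (intro ae_diff blo_add S T f g)
    thus "ae_eq M (\<lambda>x. S (\<lambda>x. f x + g x) x - T (\<lambda>x. f x + g x) x)
       (\<lambda>x. (S f x - T f x) + (S g x - T g x))" by (simp add: algebra_simps)
  qed
  have Cc: "\<forall>c. \<forall>f\<in>V. ae_eq M (\<lambda>x. S (\<lambda>x. c * f x) x - T (\<lambda>x. c * f x) x)
       (\<lambda>x. c * (S f x - T f x))"
  proof (intro allI ballI)
    fix c f assume f: "f \<in> V"
    have "ae_eq M (\<lambda>x. S (\<lambda>x. c * f x) x - T (\<lambda>x. c * f x) x)
       (\<lambda>x. c * S f x - c * T f x)"
      by (intro ae_diff blo_scale S T f)
    thus "ae_eq M (\<lambda>x. S (\<lambda>x. c * f x) x - T (\<lambda>x. c * f x) x)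
       (\<lambda>x. c * (S f x - T f x))" by (simp add: algebra_simps)
  qed
  have A: "\<forall>f\<in>V. (\<lambda>x. S f x - T f x) \<in> V"
    by (intro ballI cs_diff blo_in[OF S] blo_in[OF T])
  show ?thesis unfolding bounded_linear_op_on_def using A B Cc D by (intro conjI)
qed

lemma blo_pow: "blo T \<Longrightarrow> blo (T ^^ k)"
  by (induction k) (auto intro: blo_comp blo_id)

definition comm :: "(('a \<Rightarrow> real) \<Rightarrow> ('a \<Rightarrow> real)) \<Rightarrow> (('a \<Rightarrow> real) \<Rightarrow> ('a \<Rightarrow> real)) \<Rightarrow> bool" where
  "comm S T \<longleftrightarrow> (\<forall>f\<in>V. ae_eq M (S (T f)) (T (S f)))"

lemma comm_id: "comm id T" unfolding comm_def by (simp add: ae_refl)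

lemma comm_comp:
  assumes S1: "blo S1" and S2: "blo S2" and T: "blo T" and c1: "comm S1 T" and c2: "comm S2 T"
  shows "comm (S1 \<circ> S2) T"
  unfolding comm_def
proof
  fix f assume f: "f \<in> V"
  have e2: "ae_eq M (S2 (T f)) (T (S2 f))" using c2 f unfolding comm_def by blast
  have "ae_eq M (S1 (S2 (T f))) (S1 (T (S2 f)))"
    by (rule blo_cong[OF S1 blo_in[OF S2 blo_in[OF T f]] blo_in[OF T blo_in[OF S2 f]] e2])
  also have "ae_eq M (S1 (T (S2 f))) (T (S1 (S2 f)))" using c1 blo_in[OF S2 f] unfolding comm_def by blast
  finally show "ae_eq M ((S1 \<circ> S2) (T f)) (T ((S1 \<circ> S2) f))" by simp
qed

lemma comm_minus:
  assumes S1: "blo S1" and S2: "blo S2" and T: "blo T" and c1: "comm S1 T" and c2: "comm S2 T"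
  shows "comm (\<lambda>f x. S1 f x - S2 f x) T"
  unfolding comm_def
proof
  fix f assume f: "f \<in> V"
  have e1: "ae_eq M (S1 (T f)) (T (S1 f))" using c1 f unfolding comm_def by blast
  have e2: "ae_eq M (S2 (T f)) (T (S2 f))" using c2 f unfolding comm_def by blast
  have "ae_eq M (\<lambda>x. S1 (T f) x - S2 (T f) x) (\<lambda>x. T (S1 f) x - T (S2 f) x)"
    by (rule ae_diff[OF e1 e2])
  also have "ae_eq M (\<lambda>x. T (S1 f) x - T (S2 f) x) (T (\<lambda>x. S1 f x - S2 f x))"
    by (rule ae_sym[OF blo_diff[OF T blo_in[OF S1 f] blo_in[OF S2 f]]])
  finally show "ae_eq M ((\<lambda>f x. S1 f x - S2 f x) (T f)) (T ((\<lambda>f x. S1 f x - S2 f x) f))"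
    by simp
qed

end


context L2sp begin

lemma closed_range:
  assumes T: "blo T" and F: "F \<in> V"
    and approx: "\<And>e. e > 0 \<Longrightarrow> \<exists>h\<in>V. L2norm M h \<le> R \<and> L2norm M (\<lambda>x. T h x - F x) \<le> e"
  shows "\<exists>h\<in>V. ae_eq M F (T h)"
proof -
  define S where "S k = {h \<in> V. L2norm M (\<lambda>x. T h x - F x) \<le> 1 / real (Suc k)}" for k
  define m where "m k = Inf ((\<lambda>h. (L2norm M h)\<^sup>2) ` S k)" for k
  have Sne: "\<exists>h\<in>S k. L2norm M h \<le> R" for k
    using approx[of "1 / real (Suc k)"] unfolding S_def by auto
  have bdd: "bdd_below ((\<lambda>h. (L2norm M h)\<^sup>2) ` S k)" for k
    by (rule bdd_belowI[of _ 0]) auto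
  have m_le: "m k \<le> (L2norm M h)\<^sup>2" if "h \<in> S k" for k h
    unfolding m_def using that bdd by (intro cInf_lower) auto
  have m_ge: "m k \<le> (L2norm M h)\<^sup>2 + e" if "h \<in> S k" "e \<ge> 0" for k h e
    using m_le[OF that(1)] that(2) by simp
  have m_R: "m k \<le> R\<^sup>2" for k
  proof -
    obtain h where h: "h \<in> S k" "L2norm M h \<le> R" using Sne by blast
    have "(L2norm M h)\<^sup>2 \<le> R\<^sup>2" using h(2) L2norm_nonneg[of M h] by (intro power_mono) auto
    thus ?thesis using m_le[OF h(1)] by simp
  qed
  have Ssub: "S (Suc k) \<subseteq> S k" for k
  proof
    fix h assume "h \<in> S (Suc k)"
    moreover have "1 / real (Suc (Suc k)) \<le> 1 / real (Suc k)" by (simp add: frac_le)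
    ultimately show "h \<in> S k" unfolding S_def by auto
  qed
  have Santi: "S j \<subseteq> S k" if "k \<le> j" for k j
    using that by (induction j) (use Ssub le_Suc_eq in blast)+
  have minc: "incseq m"
  proof (rule incseq_SucI)
    fix k
    show "m k \<le> m (Suc k)" unfolding m_def
      using Sne[of "Suc k"] Ssub[of k] bdd[of k] by (intro cInf_superset_mono) auto
  qed
  have "m \<longlonglongrightarrow> (SUP i. m i)"
    using minc m_R by (intro LIMSEQ_incseq_SUP) (auto intro!: bdd_aboveI[of _ "R\<^sup>2"])
  hence mC: "Cauchy m" by (rule LIMSEQ_imp_Cauchy)
  have "\<exists>h. h \<in> S k \<and> (L2norm M h)\<^sup>2 < m k + 1 / real (Suc k)" for k
  proof -
    have ne: "(\<lambda>h. (L2norm M h)\<^sup>2) ` S k \<noteq> {}" using Sne[of k] by auto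
    have "Inf ((\<lambda>h. (L2norm M h)\<^sup>2) ` S k) < m k + 1 / real (Suc k)" unfolding m_def by simp
    from cInf_lessD[OF ne this] show ?thesis by auto
  qed
  then obtain h where hS: "\<And>k. h k \<in> S k" and hm: "\<And>k. (L2norm M (h k))\<^sup>2 < m k + 1 / real (Suc k)"
    by metis
  have hV: "h k \<in> V" for k using hS unfolding S_def by auto
  have hT: "L2norm M (\<lambda>x. T (h k) x - F x) \<le> 1 / real (Suc k)" for k using hS unfolding S_def by auto
  have key: "(L2norm M (\<lambda>x. h k x - h j x))\<^sup>2 \<le> 2 * (m j - m k) + 2 / real (Suc k) + 2 / real (Suc j)"
    if kj: "k \<le> j" for k j
  proof -
    define mid where "mid = (\<lambda>x. (1/2) * (h k x + h j x))"
    have midV: "mid \<in> V" unfolding mid_def by (intro cs_scale cs_add hV)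
    have TkV: "(\<lambda>x. T (h k) x - F x) \<in> V" by (intro cs_diff blo_in[OF T] hV F)
    have TjV: "(\<lambda>x. T (h j) x - F x) \<in> V" by (intro cs_diff blo_in[OF T] hV F)
    have "ae_eq M (T mid) (\<lambda>x. (1/2) * T (\<lambda>x. h k x + h j x) x)"
      unfolding mid_def by (rule blo_scale[OF T cs_add[OF hV hV]])
    also have "ae_eq M (\<lambda>x. (1/2) * T (\<lambda>x. h k x + h j x) x) (\<lambda>x. (1/2) * (T (h k) x + T (h j) x))"
      by (rule ae_scale[OF blo_add[OF T hV hV]])
    finally have "ae_eq M (\<lambda>x. T mid x - F x) (\<lambda>x. (1/2) * (T (h k) x + T (h j) x) - F x)"
      by (rule ae_diff[OF _ ae_refl])
    moreover have "(\<lambda>x. (1/2) * (T (h k) x + T (h j) x) - F x) = (\<lambda>x. (1/2) * ((T (h k) x - F x) + (T (h j) x - F x)))"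
      by (rule ext) (simp add: field_simps)
    ultimately have ae: "ae_eq M (\<lambda>x. T mid x - F x) (\<lambda>x. (1/2) * ((T (h k) x - F x) + (T (h j) x - F x)))"
      by simp
    have "L2norm M (\<lambda>x. T mid x - F x) = L2norm M (\<lambda>x. (1/2) * ((T (h k) x - F x) + (T (h j) x - F x)))"
      by (rule L2norm_ae[OF memL2_diff[OF cs_mem[OF blo_in[OF T midV]] cs_mem[OF F]]
           memL2_scale[OF memL2_add[OF cs_mem[OF TkV] cs_mem[OF TjV]]] ae])
    also have "\<dots> = (1/2) * L2norm M (\<lambda>x. (T (h k) x - F x) + (T (h j) x - F x))"
      using L2norm_scale[of M "1/2" "\<lambda>x. (T (h k) x - F x) + (T (h j) x - F x)"] by simp
    also have "\<dots> \<le> (1/2) * (L2norm M (\<lambda>x. T (h k) x - F x) + L2norm M (\<lambda>x. T (h j) x - F x))"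
      by (intro mult_left_mono L2norm_add cs_mem TkV TjV) simp
    also have "\<dots> \<le> (1/2) * (1 / real (Suc k) + 1 / real (Suc j))"
      using hT[of k] hT[of j] by simp
    also have "\<dots> \<le> 1 / real (Suc k)"
    proof -
      have "1 / real (Suc j) \<le> 1 / real (Suc k)" using kj by (simp add: frac_le)
      thus ?thesis by simp
    qed
    finally have "mid \<in> S k" unfolding S_def using midV by simp
    hence mmid: "m k \<le> (L2norm M mid)\<^sup>2" by (rule m_le)
    have mid2: "L2norm M (\<lambda>x. h k x + h j x) = 2 * L2norm M mid"
      unfolding mid_def L2norm_scale by simp
    have par: "(L2norm M (\<lambda>x. h k x + h j x))\<^sup>2 + (L2norm M (\<lambda>x. h k x - h j x))\<^sup>2
        = 2 * (L2norm M (h k))\<^sup>2 + 2 * (L2norm M (h j))\<^sup>2"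
      by (rule L2norm_parallelogram[OF cs_mem[OF hV] cs_mem[OF hV]])
    have "(L2norm M (\<lambda>x. h k x + h j x))\<^sup>2 = 4 * (L2norm M mid)\<^sup>2"
      unfolding mid2 by (simp add: power2_eq_square)
    hence "(L2norm M (\<lambda>x. h k x - h j x))\<^sup>2 = 2 * (L2norm M (h k))\<^sup>2 + 2 * (L2norm M (h j))\<^sup>2 - 4 * (L2norm M mid)\<^sup>2"
      using par by simp
    also have "\<dots> \<le> 2 * (m k + 1 / real (Suc k)) + 2 * (m j + 1 / real (Suc j)) - 4 * m k"
      using hm[of k] hm[of j] mmid by simp
    finally show ?thesis by (simp add: algebra_simps)
  qed
  have hC: "\<exists>N. \<forall>a\<ge>N. \<forall>b\<ge>N. L2norm M (\<lambda>x. h a x - h b x) < e" if e: "e > 0" for e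
  proof -
    have e8: "e\<^sup>2 / 8 > 0" using e by simp
    obtain N1 where N1: "\<And>a b. a \<ge> N1 \<Longrightarrow> b \<ge> N1 \<Longrightarrow> norm (m a - m b) < e\<^sup>2 / 8"
      using CauchyD[OF mC e8] by blast
    obtain N2 where N2: "1 / real (Suc N2) < e\<^sup>2 / 8"
      using reals_Archimedean[OF e8] by (auto simp: inverse_eq_divide)
    have small: "1 / real (Suc a) < e\<^sup>2 / 8" if "a \<ge> N2" for a
    proof -
      have "1 / real (Suc a) \<le> 1 / real (Suc N2)" using that by (simp add: frac_le)
      thus ?thesis using N2 by simp
    qed
    have main: "L2norm M (\<lambda>x. h k x - h j x) < e" if "k \<le> j" "k \<ge> max N1 N2" for k j
    proof -
      have "(L2norm M (\<lambda>x. h k x - h j x))\<^sup>2 \<le> 2 * (m j - m k) + 2 / real (Suc k) + 2 / real (Suc j)"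
        by (rule key[OF that(1)])
      also have "\<dots> < 2 * (e\<^sup>2 / 8) + 2 * (e\<^sup>2 / 8) + 2 * (e\<^sup>2 / 8)"
      proof -
        have "norm (m j - m k) < e\<^sup>2 / 8" using N1[of j k] that by auto
        hence "m j - m k < e\<^sup>2 / 8" by (simp only: real_norm_def abs_less_iff)
        moreover have "1 / real (Suc k) < e\<^sup>2 / 8" using small that by auto
        moreover have "1 / real (Suc j) < e\<^sup>2 / 8" using small that by auto
        ultimately show ?thesis by simp
      qed
      also have "\<dots> < e\<^sup>2" using e by simp
      finally have "(L2norm M (\<lambda>x. h k x - h j x))\<^sup>2 < e\<^sup>2" .
      thus ?thesis using e by (smt (verit) power_mono L2norm_nonneg)
    qed
    show ?thesis
    proof (intro exI allI impI)
      fix a b assume a: "a \<ge> max N1 N2" and b: "b \<ge> max N1 N2"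
      show "L2norm M (\<lambda>x. h a x - h b x) < e"
      proof (cases "a \<le> b")
        case True thus ?thesis using main a by blast
      next
        case False
        hence "L2norm M (\<lambda>x. h b x - h a x) < e" using main b by simp
        thus ?thesis using L2norm_commute[of M "h a" "h b"] by simp
      qed
    qed
  qed
  obtain f where mf: "memL2 M f" and lim: "(\<lambda>n. L2norm M (\<lambda>x. h n x - f x)) \<longlonglongrightarrow> 0"
    using L2_complete[OF P, of h] cs_mem[OF hV] hC by blast
  have fV: "f \<in> V" by (rule cs_lim[OF hV mf lim])
  obtain C where C0: "C \<ge> 0" and C: "\<forall>g\<in>V. L2norm M (T g) \<le> C * L2norm M g"
    using blo_bound[OF T] by blast
  have TfV: "(\<lambda>x. T f x - F x) \<in> V" by (intro cs_diff blo_in[OF T] fV F)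
  have bnd: "L2norm M (\<lambda>x. T f x - F x) \<le> e" if e: "e > 0" for e
  proof -
    have e2: "e / (2 * (C + 1)) > 0" using e C0 by simp
    obtain k0 where k0: "\<And>n. n \<ge> k0 \<Longrightarrow> norm (L2norm M (\<lambda>x. h n x - f x) - 0) < e / (2 * (C + 1))"
      using LIMSEQ_D[OF lim e2] by blast
    obtain k1 where k1: "1 / real (Suc k1) < e / 2"
      using reals_Archimedean[of "e/2"] e by (auto simp: inverse_eq_divide)
    define k where "k = max k0 k1"
    have hk: "L2norm M (\<lambda>x. h k x - f x) < e / (2 * (C + 1))" using k0[of k] L2norm_nonneg[of M] by (simp add: k_def)
    have kk: "1 / real (Suc k) < e / 2"
    proof -
      have "1 / real (Suc k) \<le> 1 / real (Suc k1)" by (simp add: frac_le k_def)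
      thus ?thesis using k1 by simp
    qed
    have dV: "(\<lambda>x. f x - h k x) \<in> V" by (intro cs_diff fV hV)
    have "L2norm M (\<lambda>x. T f x - F x) \<le> L2norm M (\<lambda>x. T f x - T (h k) x) + L2norm M (\<lambda>x. T (h k) x - F x)"
      by (rule L2norm_tri) (intro cs_mem blo_in[OF T] fV hV F)+
    also have "L2norm M (\<lambda>x. T f x - T (h k) x) = L2norm M (T (\<lambda>x. f x - h k x))"
      by (rule L2norm_ae[OF memL2_diff[OF cs_mem[OF blo_in[OF T fV]] cs_mem[OF blo_in[OF T hV]]]
            cs_mem[OF blo_in[OF T dV]] ae_sym[OF blo_diff[OF T fV hV]]])
    also have "\<dots> \<le> C * L2norm M (\<lambda>x. f x - h k x)" using C dV by blast
    also have "L2norm M (\<lambda>x. f x - h k x) = L2norm M (\<lambda>x. h k x - f x)" by (rule L2norm_commute)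
    also have "C * L2norm M (\<lambda>x. h k x - f x) \<le> C * (e / (2 * (C + 1)))"
      using hk C0 by (intro mult_left_mono) auto
    also have "C * (e / (2 * (C + 1))) \<le> e / 2"
    proof -
      have "C * (e / (2 * (C + 1))) = (e / 2) * (C / (C + 1))" by (simp add: field_simps)
      also have "\<dots> \<le> (e / 2) * 1" using C0 e by (intro mult_left_mono) auto
      finally show ?thesis by simp
    qed
    finally show ?thesis using hT[of k] kk by simp
  qed
  have "L2norm M (\<lambda>x. T f x - F x) \<le> 0"
    by (rule field_le_epsilon) (use bnd in auto)
  hence "L2norm M (\<lambda>x. T f x - F x) = 0" using L2norm_nonneg[of M] by (simp add: order_antisym)
  hence "ae_eq M (\<lambda>x. T f x - F x) (\<lambda>x. 0)" by (intro L2norm_eq0 cs_mem TfV)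
  hence "ae_eq M F (T f)" unfolding ae_eq_def by (auto elim: eventually_mono)
  with fV show ?thesis by blast
qed

end


definition Ssum where
  "Ssum A d n F = (\<lambda>x. \<Sum>i\<in>Pi\<^sub>E {..<d} (\<lambda>q. {..(n::nat\<Rightarrow>nat) q}). mpow A d i F x)"

lemma mpow_cong: "(\<And>q. q < d \<Longrightarrow> i q = j q) \<Longrightarrow> mpow A d i = mpow A d j"
  by (induction d) auto

lemma mpow_zero: "(\<And>q. q < d \<Longrightarrow> i q = 0) \<Longrightarrow> mpow A d i = id"
  by (induction d) auto

lemma Ssum_cong: "(\<And>q. q < d \<Longrightarrow> n q = n' q) \<Longrightarrow> Ssum A d n = Ssum A d n'"
proof -
  assume h: "\<And>q. q < d \<Longrightarrow> n q = n' q"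
  have "Pi\<^sub>E {..<d} (\<lambda>q. {..n q}) = Pi\<^sub>E {..<d} (\<lambda>q. {..n' q})"
    by (rule PiE_cong) (use h in auto)
  thus ?thesis unfolding Ssum_def by simp
qed

lemma Ssum_zero: "Ssum A d (\<lambda>_. 0) F = F"
proof -
  have "Pi\<^sub>E {..<d} (\<lambda>q. {..(\<lambda>_. 0::nat) q}) = {\<lambda>q\<in>{..<d}. 0::nat}"
    using ext_funcset_to_sing_iff[of "{..<d}" "0::nat"] by simp
  moreover have "mpow A d (\<lambda>q\<in>{..<d}. 0::nat) = id" by (rule mpow_zero) simp
  ultimately show ?thesis unfolding Ssum_def by simp
qed

lemma Ssum_0: "Ssum A 0 n F = F"
  unfolding Ssum_def by simp

lemma Ssum_Suc_eq:
  "Ssum A (Suc d) n F = (\<lambda>x. \<Sum>g\<in>Pi\<^sub>E {..<d} (\<lambda>q. {..n q}). \<Sum>y\<le>n d. mpow A d g ((A d ^^ y) F) x)"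
proof (rule ext)
  fix x
  let ?N = "\<lambda>q. {..n q}"
  have "Ssum A (Suc d) n F x = (\<Sum>i\<in>(\<lambda>(y, g). g(d := y)) ` (?N d \<times> Pi\<^sub>E {..<d} ?N). mpow A (Suc d) i F x)"
    unfolding Ssum_def lessThan_Suc PiE_insert_eq by simp
  also have "\<dots> = (\<Sum>p\<in>?N d \<times> Pi\<^sub>E {..<d} ?N. mpow A (Suc d) ((\<lambda>(y, g). g(d := y)) p) F x)"
    by (subst sum.reindex[OF inj_combinator]) (auto simp: comp_def intro!: sum.cong)
  also have "\<dots> = (\<Sum>y\<in>?N d. \<Sum>g\<in>Pi\<^sub>E {..<d} ?N. mpow A (Suc d) (g(d := y)) F x)"
    by (subst sum.cartesian_product) (auto intro!: sum.cong simp del: mpow.simps)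
  also have "\<dots> = (\<Sum>g\<in>Pi\<^sub>E {..<d} ?N. \<Sum>y\<in>?N d. mpow A (Suc d) (g(d := y)) F x)"
    by (rule sum.swap)
  also have "\<dots> = (\<Sum>g\<in>Pi\<^sub>E {..<d} ?N. \<Sum>y\<in>?N d. mpow A d g ((A d ^^ y) F) x)"
  proof (intro sum.cong refl)
    fix g y
    have "mpow A d (g(d := y)) = mpow A d g" by (rule mpow_cong) simp
    thus "mpow A (Suc d) (g(d := y)) F x = mpow A d g ((A d ^^ y) F) x" by simp
  qed
  finally show "Ssum A (Suc d) n F x = (\<Sum>g\<in>Pi\<^sub>E {..<d} ?N. \<Sum>y\<le>n d. mpow A d g ((A d ^^ y) F) x)" .
qed

locale Ops = L2sp +
  fixes A :: "nat \<Rightarrow> (('a \<Rightarrow> real) \<Rightarrow> ('a \<Rightarrow> real))" and D :: nat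
  assumes Ablo: "\<And>q. q < D \<Longrightarrow> bounded_linear_op_on M V (A q)"
    and Acomm: "\<And>p q f. p < D \<Longrightarrow> q < D \<Longrightarrow> f \<in> V \<Longrightarrow> ae_eq M (A p (A q f)) (A q (A p f))"
begin

lemma blo_id': "blo (\<lambda>a. a)" using blo_id by (simp add: id_def)
lemma comm_id': "comm (\<lambda>a. a) T" using comm_id by (simp add: id_def)

lemma mpow_blo: "d \<le> D \<Longrightarrow> blo (mpow A d i)"
proof (induction d)
  case 0 then show ?case by (simp add: blo_id')
next
  case (Suc d)
  have "blo (mpow A d i)" using Suc by simp
  moreover have "blo (A d ^^ i d)" using Suc by (intro blo_pow Ablo) simp
  ultimately show ?case unfolding mpow.simps by (rule blo_comp)
qed

lemma Ssum_V: "d \<le> D \<Longrightarrow> F \<in> V \<Longrightarrow> Ssum A d n F \<in> V"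
  unfolding Ssum_def by (intro cs_sum blo_in[OF mpow_blo]) (auto simp: finite_PiE)

lemma R_blo: "q < D \<Longrightarrow> blo (\<lambda>f x. f x - A q f x)"
  using blo_minus[OF blo_id Ablo, of q] by simp

lemma PI_blo: "d \<le> D \<Longrightarrow> blo (prod_I_minus A d)"
proof (induction d)
  case 0 then show ?case by (simp add: blo_id')
next
  case (Suc d)
  have "blo (prod_I_minus A d)" using Suc by simp
  moreover have "blo (\<lambda>f x. f x - A d f x)" using Suc by (intro R_blo) simp
  ultimately show ?case unfolding prod_I_minus.simps by (rule blo_comp)
qed

lemma comm_sym: "comm S T \<Longrightarrow> comm T S"
  unfolding comm_def by (auto intro: ae_sym)

lemma PI_comm: "d' \<le> d \<Longrightarrow> d < D \<Longrightarrow> comm (prod_I_minus A d') (A d)"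
proof (induction d')
  case 0 then show ?case by (simp add: comm_id')
next
  case (Suc d')
  have c1: "comm (\<lambda>f x. id f x - A d' f x) (A d)"
  proof (rule comm_minus[OF blo_id Ablo Ablo])
    show "comm id (A d)" by (rule comm_id)
    show "comm (A d') (A d)" unfolding comm_def using Acomm Suc.prems by auto
  qed (use Suc.prems in auto)
  have "comm (prod_I_minus A d' \<circ> (\<lambda>f x. f x - A d' f x)) (A d)"
    by (rule comm_comp[OF PI_blo R_blo Ablo]) (use Suc c1 in auto)
  thus ?case by (simp only: prod_I_minus.simps)
qed

lemma Ssum_split:
  assumes d: "d < D" and F: "F \<in> V"
  shows "ae_eq M (Ssum A (Suc d) n F) (Ssum A d n (\<lambda>x. \<Sum>k\<le>n d. (A d ^^ k) F x))"
proof -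
  let ?N = "\<lambda>q. {..n q}"
  have AkV: "(A d ^^ k) F \<in> V" for k by (rule blo_in[OF blo_pow[OF Ablo[OF d]] F])
  have "ae_eq M (\<lambda>x. \<Sum>g\<in>Pi\<^sub>E {..<d} ?N. \<Sum>y\<le>n d. mpow A d g ((A d ^^ y) F) x)
      (\<lambda>x. \<Sum>g\<in>Pi\<^sub>E {..<d} ?N. mpow A d g (\<lambda>x. \<Sum>k\<le>n d. (A d ^^ k) F x) x)"
  proof (rule ae_sum)
    show "finite (Pi\<^sub>E {..<d} ?N)" by (simp add: finite_PiE)
    fix g
    show "ae_eq M (\<lambda>x. \<Sum>y\<le>n d. mpow A d g ((A d ^^ y) F) x) (mpow A d g (\<lambda>x. \<Sum>k\<le>n d. (A d ^^ k) F x))"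
      by (rule ae_sym[OF blo_sum[OF mpow_blo]]) (use d AkV in auto)
  qed
  thus ?thesis unfolding Ssum_Suc_eq by (simp add: Ssum_def)
qed

end


context Ops begin

lemma approx:
  "d \<le> D \<Longrightarrow> F \<in> V \<Longrightarrow> (\<forall>n. L2norm M (Ssum A d n F) \<le> B) \<Longrightarrow> e > 0 \<Longrightarrow>
   \<exists>T\<in>V. L2norm M T \<le> B \<and> L2norm M (\<lambda>x. prod_I_minus A d T x - F x) \<le> e"
proof (induction d arbitrary: F B e)
  case 0
  have "L2norm M F \<le> B" using 0 by (simp add: Ssum_0)
  moreover have "L2norm M (\<lambda>x. F x - F x) = 0" by (simp add: L2norm_def)
  ultimately show ?case using 0 by (intro bexI[of _ F]) auto
next
  case (Suc d)
  have d: "d < D" and dD: "d \<le> D" using Suc.prems by auto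
  have F: "F \<in> V" using Suc.prems by simp
  have e: "e > 0" using Suc.prems by simp
  have hyp: "\<And>n. L2norm M (Ssum A (Suc d) n F) \<le> B" using Suc.prems by simp
  have B0: "0 \<le> B" using hyp[of "\<lambda>_. 0"] L2norm_nonneg[of M] by (meson order_trans)
  have Ad: "blo (A d)" by (rule Ablo[OF d])
  define G where "G m = (\<lambda>x. \<Sum>k\<le>m. (A d ^^ k) F x)" for m
  have AkV: "(A d ^^ k) F \<in> V" for k by (rule blo_in[OF blo_pow[OF Ad] F])
  have GV: "G m \<in> V" for m unfolding G_def by (intro cs_sum AkV) auto
  have Gb: "L2norm M (Ssum A d n (G m)) \<le> B" for n m
  proof -
    define n' where "n' = n(d := m)"
    have "ae_eq M (Ssum A (Suc d) n' F) (Ssum A d n' (\<lambda>x. \<Sum>k\<le>n' d. (A d ^^ k) F x))"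
      by (rule Ssum_split[OF d F])
    moreover have "Ssum A d n' = Ssum A d n" by (rule Ssum_cong) (simp add: n'_def)
    moreover have "(\<lambda>x. \<Sum>k\<le>n' d. (A d ^^ k) F x) = G m" by (simp add: n'_def G_def)
    ultimately have ae: "ae_eq M (Ssum A (Suc d) n' F) (Ssum A d n (G m))" by simp
    have "L2norm M (Ssum A (Suc d) n' F) = L2norm M (Ssum A d n (G m))"
      by (rule cs_normeq[OF Ssum_V[OF Suc.prems(1) F] Ssum_V[OF dD GV] ae])
    thus ?thesis using hyp[of n'] by simp
  qed
  have GB: "L2norm M (G m) \<le> B" for m using Gb[of "\<lambda>_. 0" m] by (simp add: Ssum_zero)
  have G0: "G 0 = F" by (simp add: G_def)
  have FB: "L2norm M F \<le> B" using GB[of 0] G0 by simp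
  obtain C where C0: "C \<ge> 0" and C: "\<forall>f\<in>V. L2norm M (A d f) \<le> C * L2norm M f"
    using blo_bound[OF Ad] by blast
  define e' where "e' = e / (2 * (C + 1))"
  have e': "e' > 0" unfolding e'_def using e C0 by simp
  have "\<forall>m. \<exists>T. T \<in> V \<and> L2norm M T \<le> B \<and> L2norm M (\<lambda>x. prod_I_minus A d T x - G m x) \<le> e'"
  proof
    fix m
    show "\<exists>T. T \<in> V \<and> L2norm M T \<le> B \<and> L2norm M (\<lambda>x. prod_I_minus A d T x - G m x) \<le> e'"
      using Suc.IH[OF dD GV, where B=B and e=e'] Gb e' by blast
  qed
  then obtain Tm where TmV: "\<And>m. Tm m \<in> V" and TmB: "\<And>m. L2norm M (Tm m) \<le> B"
    and TmE: "\<And>m. L2norm M (\<lambda>x. prod_I_minus A d (Tm m) x - G m x) \<le> e'"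
    by metis
  obtain K :: nat where K: "4 * B / e < real K" using reals_Archimedean2 by blast
  have Kpos: "real K > 0" using K B0 e by (smt (verit) divide_nonneg_pos)
  define T where "T = (\<lambda>x. (1 / real K) * (\<Sum>m<K. Tm m x))"
  have SV: "(\<lambda>x. \<Sum>m<K. Tm m x) \<in> V" by (intro cs_sum TmV) auto
  have TV: "T \<in> V" unfolding T_def by (rule cs_scale[OF SV])
  have TB: "L2norm M T \<le> B"
  proof -
    have "L2norm M T = (1 / real K) * L2norm M (\<lambda>x. \<Sum>m<K. Tm m x)"
      unfolding T_def L2norm_scale using Kpos by simp
    also have "\<dots> \<le> (1 / real K) * (\<Sum>m<K. L2norm M (Tm m))"
      using Kpos by (intro mult_left_mono L2norm_sum cs_mem TmV) auto
    also have "\<dots> \<le> (1 / real K) * (\<Sum>m<K. B)"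
      using Kpos by (intro mult_left_mono sum_mono TmB) auto
    also have "\<dots> = B" using Kpos by simp
    finally show ?thesis .
  qed
  let ?P = "prod_I_minus A d"
  let ?R = "\<lambda>f x. f x - A d f x"
  let ?Q = "prod_I_minus A (Suc d)"
  have Pblo: "blo ?P" by (rule PI_blo[OF dD])
  have Rblo: "blo ?R" by (rule R_blo[OF d])
  have Qblo: "blo ?Q" by (rule PI_blo[OF Suc.prems(1)])
  have Qeq: "?Q g = ?P (?R g)" for g by simp
  have cAP: "comm (A d) ?P" by (rule comm_sym[OF PI_comm[OF order_refl d]])
  have cRP: "comm ?R ?P" using comm_minus[OF blo_id' Ad Pblo comm_id' cAP] by simp
  have cPR: "\<And>f. f \<in> V \<Longrightarrow> ae_eq M (?P (?R f)) (?R (?P f))"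
    using comm_sym[OF cRP] unfolding comm_def by blast
  define E where "E m = (\<lambda>x. ?P (Tm m) x - G m x)" for m
  have EV: "E m \<in> V" for m unfolding E_def by (intro cs_diff blo_in[OF Pblo] TmV GV)
  have EB: "L2norm M (E m) \<le> e'" for m unfolding E_def by (rule TmE)
  have PT: "?P (Tm m) = (\<lambda>x. G m x + E m x)" for m unfolding E_def by simp
  have RG: "ae_eq M (?R (G m)) (\<lambda>x. F x - (A d ^^ Suc m) F x)" for m
  proof -
    have "ae_eq M (A d (G m)) (\<lambda>x. \<Sum>k\<le>m. A d ((A d ^^ k) F) x)"
      unfolding G_def by (rule blo_sum[OF Ad]) (auto intro: AkV)
    hence "ae_eq M (?R (G m)) (\<lambda>x. G m x - (\<Sum>k\<le>m. A d ((A d ^^ k) F) x))"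
      by (rule ae_diff[OF ae_refl])
    moreover have "(\<lambda>x. G m x - (\<Sum>k\<le>m. A d ((A d ^^ k) F) x)) = (\<lambda>x. F x - (A d ^^ Suc m) F x)"
    proof
      fix x
      have "G m x - (\<Sum>k\<le>m. A d ((A d ^^ k) F) x) = (\<Sum>k\<le>m. (A d ^^ k) F x - (A d ^^ Suc k) F x)"
        unfolding G_def by (simp add: sum_subtractf)
      also have "\<dots> = (A d ^^ 0) F x - (A d ^^ Suc m) F x"
        by (rule sum_telescope[of "\<lambda>k. (A d ^^ k) F x"])
      finally show "G m x - (\<Sum>k\<le>m. A d ((A d ^^ k) F) x) = F x - (A d ^^ Suc m) F x" by simp
    qed
    ultimately show ?thesis by simp
  qed
  have step3: "ae_eq M (?Q (Tm m)) (\<lambda>x. (F x - (A d ^^ Suc m) F x) + ?R (E m) x)" for m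
  proof -
    have "ae_eq M (?Q (Tm m)) (?R (?P (Tm m)))" unfolding Qeq by (rule cPR[OF TmV])
    also have "?R (?P (Tm m)) = ?R (\<lambda>x. G m x + E m x)" by (simp only: PT)
    also have "ae_eq M (?R (\<lambda>x. G m x + E m x)) (\<lambda>x. ?R (G m) x + ?R (E m) x)"
      by (rule blo_add[OF Rblo GV EV])
    also have "ae_eq M (\<lambda>x. ?R (G m) x + ?R (E m) x) (\<lambda>x. (F x - (A d ^^ Suc m) F x) + ?R (E m) x)"
      by (rule ae_add[OF RG ae_refl])
    finally show ?thesis .
  qed
  have QT: "ae_eq M (?Q T) (\<lambda>x. (1 / real K) * (\<Sum>m<K. (F x - (A d ^^ Suc m) F x) + ?R (E m) x))"
  proof -
    have "ae_eq M (?Q T) (\<lambda>x. (1 / real K) * ?Q (\<lambda>x. \<Sum>m<K. Tm m x) x)"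
      unfolding T_def by (rule blo_scale[OF Qblo SV])
    also have "ae_eq M (\<lambda>x. (1 / real K) * ?Q (\<lambda>x. \<Sum>m<K. Tm m x) x) (\<lambda>x. (1 / real K) * (\<Sum>m<K. ?Q (Tm m) x))"
      by (rule ae_scale[OF blo_sum[OF Qblo]]) (auto intro: TmV)
    also have "ae_eq M (\<lambda>x. (1 / real K) * (\<Sum>m<K. ?Q (Tm m) x))
        (\<lambda>x. (1 / real K) * (\<Sum>m<K. (F x - (A d ^^ Suc m) F x) + ?R (E m) x))"
      by (rule ae_scale, rule ae_sum) (simp, rule step3)
    finally show ?thesis .
  qed
  have ptw: "(1 / real K) * (\<Sum>m<K. (F x - (A d ^^ Suc m) F x) + ?R (E m) x) - F x
      = (1 / real K) * (\<Sum>m<K. ?R (E m) x) - (1 / real K) * (G K x - F x)" for x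
  proof -
    have GK: "G K x = F x + (\<Sum>m<K. (A d ^^ Suc m) F x)"
      unfolding G_def by (subst sum.atMost_shift) simp
    have "(\<Sum>m<K. (F x - (A d ^^ Suc m) F x) + ?R (E m) x)
        = real K * F x - (\<Sum>m<K. (A d ^^ Suc m) F x) + (\<Sum>m<K. ?R (E m) x)"
      by (simp add: sum.distrib sum_subtractf)
    thus ?thesis unfolding GK using Kpos by (simp add: field_simps)
  qed
  define W where "W = (\<lambda>x. (1 / real K) * (\<Sum>m<K. ?R (E m) x) - (1 / real K) * (G K x - F x))"
  have REV: "?R (E m) \<in> V" for m by (rule blo_in[OF Rblo EV])
  have SRV: "(\<lambda>x. \<Sum>m<K. ?R (E m) x) \<in> V" by (intro cs_sum REV) auto
  have GFV: "(\<lambda>x. G K x - F x) \<in> V" by (intro cs_diff GV F)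
  have WV: "W \<in> V" unfolding W_def by (intro cs_diff cs_scale SRV GFV)
  have QTV: "(\<lambda>x. ?Q T x - F x) \<in> V" by (intro cs_diff blo_in[OF Qblo TV] F)
  have aeW: "ae_eq M (\<lambda>x. ?Q T x - F x) W"
  proof -
    have "ae_eq M (\<lambda>x. ?Q T x - F x) (\<lambda>x. (1 / real K) * (\<Sum>m<K. (F x - (A d ^^ Suc m) F x) + ?R (E m) x) - F x)"
      by (rule ae_diff[OF QT ae_refl])
    thus ?thesis unfolding W_def ptw .
  qed
  have RB: "L2norm M (?R f) \<le> (1 + C) * L2norm M f" if f: "f \<in> V" for f
  proof -
    have "L2norm M (?R f) \<le> L2norm M f + L2norm M (A d f)"
      by (rule L2norm_diff[OF cs_mem[OF f] cs_mem[OF blo_in[OF Ad f]]])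
    also have "\<dots> \<le> L2norm M f + C * L2norm M f" using C f by simp
    finally show ?thesis by (simp add: algebra_simps)
  qed
  have "L2norm M (\<lambda>x. ?Q T x - F x) = L2norm M W" by (rule cs_normeq[OF QTV WV aeW])
  also have "L2norm M W \<le> L2norm M (\<lambda>x. (1 / real K) * (\<Sum>m<K. ?R (E m) x)) + L2norm M (\<lambda>x. (1 / real K) * (G K x - F x))"
    unfolding W_def by (rule L2norm_diff[OF cs_mem[OF cs_scale[OF SRV]] cs_mem[OF cs_scale[OF GFV]]])
  also have "\<dots> = (1 / real K) * L2norm M (\<lambda>x. \<Sum>m<K. ?R (E m) x) + (1 / real K) * L2norm M (\<lambda>x. G K x - F x)"
    by (simp only: L2norm_scale) (use Kpos in simp)
  also have "\<dots> \<le> (1 / real K) * (real K * ((1 + C) * e')) + (1 / real K) * (2 * B)"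
  proof (rule add_mono)
    have "L2norm M (\<lambda>x. \<Sum>m<K. ?R (E m) x) \<le> (\<Sum>m<K. L2norm M (?R (E m)))"
      by (rule L2norm_sum) (auto intro: cs_mem REV)
    also have "\<dots> \<le> (\<Sum>m<K. (1 + C) * e')"
    proof (rule sum_mono)
      fix m
      have "L2norm M (?R (E m)) \<le> (1 + C) * L2norm M (E m)" by (rule RB[OF EV])
      also have "\<dots> \<le> (1 + C) * e'" using EB[of m] C0 by (intro mult_left_mono) auto
      finally show "L2norm M (?R (E m)) \<le> (1 + C) * e'" .
    qed
    also have "\<dots> = real K * ((1 + C) * e')" by simp
    finally show "(1 / real K) * L2norm M (\<lambda>x. \<Sum>m<K. ?R (E m) x) \<le> (1 / real K) * (real K * ((1 + C) * e'))"
      using Kpos by (intro mult_left_mono) auto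
  next
    have "L2norm M (\<lambda>x. G K x - F x) \<le> L2norm M (G K) + L2norm M F"
      by (rule L2norm_diff[OF cs_mem[OF GV] cs_mem[OF F]])
    also have "\<dots> \<le> 2 * B" using GB[of K] FB by simp
    finally show "(1 / real K) * L2norm M (\<lambda>x. G K x - F x) \<le> (1 / real K) * (2 * B)"
      using Kpos by (intro mult_left_mono) auto
  qed
  also have "\<dots> = e / 2 + 2 * B / real K"
  proof -
    have "(1 / real K) * (real K * ((1 + C) * e')) = (1 + C) * e'" using Kpos by simp
    moreover have "(1 + C) * e' = e / 2" unfolding e'_def using C0 by (simp add: field_simps)
    moreover have "(1 / real K) * (2 * B) = 2 * B / real K" by simp
    ultimately show ?thesis by (simp only:)
  qed
  also have "\<dots> \<le> e / 2 + e / 2"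
  proof -
    have "4 * B < e * real K" using K e by (simp add: field_simps)
    hence "2 * B / real K \<le> e / 2" using Kpos by (simp add: field_simps)
    thus ?thesis by simp
  qed
  finally have "L2norm M (\<lambda>x. ?Q T x - F x) \<le> e" by simp
  with TV TB show ?case by blast
qed

end


theorem mainTheorem9:
  fixes M :: "'a measure" and V :: "('a \<Rightarrow> real) set" and d :: nat
    and A :: "nat \<Rightarrow> (('a \<Rightarrow> real) \<Rightarrow> ('a \<Rightarrow> real))" and F :: "'a \<Rightarrow> real"
  assumes "prob_space M"
    and "closed_L2_subspace M V"
    and "\<And>q. q < d \<Longrightarrow> bounded_linear_op_on M V (A q)"
    and "\<And>p q f. p < d \<Longrightarrow> q < d \<Longrightarrow> f \<in> V \<Longrightarrow> ae_eq M (A p (A q f)) (A q (A p f))"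
    and "F \<in> V"
    and "\<exists>B. \<forall>n::nat \<Rightarrow> nat.
           L2norm M (\<lambda>x. \<Sum>i\<in>Pi\<^sub>E {..<d} (\<lambda>q. {..n q}). mpow A d i F x) \<le> B"
  shows "\<exists>h\<in>V. ae_eq M F (prod_I_minus A d h)"
proof -
  have L: "L2sp M V" by (rule L2sp.intro[OF assms(2) assms(1)])
  have OA: "Ops_axioms M V A d" by (rule Ops_axioms.intro[OF assms(3) assms(4)])
  interpret O: Ops M V A d by (rule Ops.intro[OF L OA])
  obtain B where B: "\<And>n. L2norm M (Ssum A d n F) \<le> B"
    using assms(6) unfolding Ssum_def by blast
  show ?thesis
  proof (rule O.closed_range[OF O.PI_blo[OF order_refl] assms(5)])
    fix e :: real assume e: "e > 0"
    show "\<exists>h\<in>V. L2norm M h \<le> B \<and> L2norm M (\<lambda>x. prod_I_minus A d h x - F x) \<le> e"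
      by (rule O.approx[OF order_refl assms(5) allI[OF B] e])
  qed
qed


end
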